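(* Let $u$ be the $C^2$ solution of $$ r\left(1+4u'^2+3u'^4\right) - 2u'\left(1+u'^2\right) + 2r\,u''\left(3u'^2-1\right)=0$$ with $u(0)=u'(0)=0$, defined on its maximal interval $[0,r_M)$. Then $u'(r)>0$ for all $r\in(0,r_M)$ (so $u$ is strictly increasing), and $u$ is convex on $[0,r_M)$; equivalently, the curvature of the profile curve $r\mapsto (r,u(r))$ is positive on its maximal domain and its slope $u'$ increases from $0$ towards $1/\sqrt3$.
   Context: The maximal domain of this solution is a bounded interval $[0,r_M)$ with $\lim_{r\to r_M^-}u'(r)=1/\sqrt3$, and $u''(0)=1/4$. *)

theory Defs
  imports "HOL-Analysis.Analysis"
begin

definition ode_eq :: "real \<Rightarrow> real \<Rightarrow> real \<Rightarrow> bool" where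
  "ode_eq r p q \<longleftrightarrow>
     r * (1 + 4 * p^2 + 3 * p^4) - 2 * p * (1 + p^2) + 2 * r * q * (3 * p^2 - 1) = 0"

definition C2_solution ::
  "real \<Rightarrow> (real \<Rightarrow> real) \<Rightarrow> (real \<Rightarrow> real) \<Rightarrow> (real \<Rightarrow> real) \<Rightarrow> bool" where
  "C2_solution R u u1 u2 \<longleftrightarrow>
     (\<forall>r\<in>{0..<R}. (u has_real_derivative u1 r) (at r within {0..<R}))
   \<and> (\<forall>r\<in>{0..<R}. (u1 has_real_derivative u2 r) (at r within {0..<R}))
   \<and> continuous_on {0..<R} u2
   \<and> (\<forall>r\<in>{0..<R}. ode_eq r (u1 r) (u2 r))
   \<and> u 0 = 0 \<and> u1 0 = 0"

end

theory Submission
  imports Defs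
begin

lemma mvt_within:
  fixes f f' :: "real \<Rightarrow> real"
  assumes d: "\<And>x. x \<in> {0..<R} \<Longrightarrow> (f has_real_derivative f' x) (at x within {0..<R})"
    and "0 \<le> a" "a < b" "b < R"
  shows "\<exists>z. a < z \<and> z < b \<and> f b - f a = (b - a) * f' z"
proof -
  have c: "continuous_on {0..<R} f" by (rule DERIV_continuous_on[OF d])
  have c2: "continuous_on {a..b} f" by (rule continuous_on_subset[OF c]) (use assms in auto)
  have dd: "(f has_real_derivative f' x) (at x)" if "a<x" "x<b" for x
  proof -
    have "x \<in> interior {0..<R}" using assms that by auto
    then have "at x within {0..<R} = at x" by (rule at_within_interior)
    then show ?thesis using d[of x] that assms by auto
  qed
  obtain l z where "a<z" "z<b" "DERIV f z :> l" "f b - f a = (b-a)*l"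
    using MVT[OF \<open>a<b\<close> c2] dd real_differentiable_def by meson
  then show ?thesis using DERIV_unique dd by metis
qed

lemma neg_lemma:
  fixes g g' :: "real \<Rightarrow> real"
  assumes R: "R > 0"
    and d: "\<And>x. x \<in> {0..<R} \<Longrightarrow> (g has_real_derivative g' x) (at x within {0..<R})"
    and g0: "g 0 = 0" and g'0: "g' 0 < 0"
    and z: "\<And>x. x \<in> {0<..<R} \<Longrightarrow> g x = 0 \<Longrightarrow> g' x < 0"
  shows "\<forall>x\<in>{0<..<R}. g x < 0"
proof (rule ccontr)
  assume "\<not> ?thesis"
  then obtain b where b: "b \<in> {0<..<R}" "g b \<ge> 0" by force
  have cg: "continuous_on {0..<R} g" by (rule DERIV_continuous_on[OF d])
  have "((\<lambda>y. (g y - g 0) / (y - 0)) \<longlongrightarrow> g' 0) (at 0 within {0..<R})"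
    using d[of 0] R by (simp add: has_field_derivative_iff)
  then have "eventually (\<lambda>y. (g y - g 0) / (y - 0) < 0) (at 0 within {0..<R})"
    using g'0 by (rule order_tendstoD(2))
  then obtain e where e: "e > 0" "\<And>y. y \<in> {0..<R} \<Longrightarrow> y \<noteq> 0 \<Longrightarrow> dist y 0 < e \<Longrightarrow> (g y - g 0) / (y - 0) < 0"
    unfolding eventually_at by blast
  define a where "a = min (e/2) (b/2)"
  have a: "0 < a" "a < b" "a < e" using e b by (auto simp: a_def)
  have ga: "g a < 0"
    using e(2)[of a] a b g0 by (auto simp: divide_less_0_iff)
  define T where "T = {x \<in> {a..b}. (\<lambda>_. 0) x \<le> g x}"
  have cT: "closed T" unfolding T_def
    by (rule continuous_on_closed_Collect_le) (use a b in \<open>auto intro!: continuous_on_subset[OF cg] simp: continuous_on_const\<close>)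
  have bT: "b \<in> T" using b a by (auto simp: T_def)
  have bddT: "bdd_below T" unfolding T_def by (rule bdd_belowI[of _ a]) auto
  define c where "c = Inf T"
  have cT: "c \<in> T" unfolding c_def using closed_contains_Inf[OF _ bddT cT] bT by auto
  have cle: "\<And>x. x \<in> T \<Longrightarrow> c \<le> x" unfolding c_def using bddT by (simp add: cInf_lower)
  have c1: "a \<le> c" "c \<le> b" "0 \<le> g c" using cT by (auto simp: T_def)
  have ac: "a < c" using c1 ga by (metis order_le_less not_le)
  have neg: "g x < 0" if "a \<le> x" "x < c" for x
  proof (rule ccontr)
    assume "\<not> g x < 0"
    then have "x \<in> T" using that c1 by (auto simp: T_def)
    then show False using cle[of x] that by auto
  qed
  have gc: "g c = 0"
  proof (rule ccontr)
    assume "g c \<noteq> 0"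
    then have "g a \<le> 0" "0 \<le> g c" using ga c1 by auto
    moreover have "continuous_on {a..c} g" by (rule continuous_on_subset[OF cg]) (use a b c1 in auto)
    ultimately obtain x where x: "a \<le> x" "x \<le> c" "g x = 0" using IVT'[of g a 0 c] ac by auto
    then have "x \<noteq> c" using \<open>g c \<noteq> 0\<close> by auto
    then show False using neg[of x] x by auto
  qed
  have cR: "c \<in> {0<..<R}" using a b c1 by auto
  have "((\<lambda>y. (g y - g c) / (y - c)) \<longlongrightarrow> g' c) (at c within {0..<R})"
    using d[of c] cR by (simp add: has_field_derivative_iff)
  then have "eventually (\<lambda>y. (g y - g c) / (y - c) < 0) (at c within {0..<R})"
    using z[OF cR gc] by (rule order_tendstoD(2))
  then obtain e2 where e2: "e2 > 0" "\<And>y. y \<in> {0..<R} \<Longrightarrow> y \<noteq> c \<Longrightarrow> dist y c < e2 \<Longrightarrow> (g y - g c) / (y - c) < 0"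
    unfolding eventually_at by blast
  define y where "y = max ((a+c)/2) (c - e2/2)"
  have y1: "a \<le> y" "y < c" "c - y < e2" unfolding y_def using ac e2(1) by (auto simp: le_max_iff_disj)
  have y: "a \<le> y" "y < c" "dist y c < e2" "y \<in> {0..<R}"
    using y1 a cR by (auto simp: dist_real_def)
  have "(g y - g c) / (y - c) < 0" using e2(2)[OF y(4)] y by auto
  moreover have "g y < 0" using neg y by auto
  ultimately show False using y gc by (auto simp: divide_less_0_iff)
qed

lemma convex_within:
  fixes f f' :: "real \<Rightarrow> real"
  assumes d: "\<And>x. x \<in> {0..<R} \<Longrightarrow> (f has_real_derivative f' x) (at x within {0..<R})"
    and mono: "\<And>x y. x \<in> {0..<R} \<Longrightarrow> y \<in> {0..<R} \<Longrightarrow> x \<le> y \<Longrightarrow> f' x \<le> f' y"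
  shows "convex_on {0..<R} f"
proof (rule convex_on_linorderI)
  show "convex {0..<R}" by simp
next
  fix t x y :: real
  assume t: "t > 0" "t < 1"
  assume xy: "x \<in> {0..<R}" "y \<in> {0..<R}" "x < y"
  define z where "z = (1 - t) * x + t * y"
  from xy t have xz: "z > x"
    by (simp add: z_def algebra_simps)
  have "y - z = (1 - t) * (y - x)"
    by (simp add: z_def algebra_simps)
  also from xy t have "\<dots> > 0"
    by (intro mult_pos_pos) simp_all
  finally have yz: "z < y"
    by simp
  obtain \<xi> where \<xi>: "\<xi> > x" "\<xi> < z" "f z - f x = (z - x) * f' \<xi>"
    using mvt_within[OF d, of x z] xy xz yz by auto
  obtain \<eta> where \<eta>: "\<eta> > z" "\<eta> < y" "f y - f z = (y - z) * f' \<eta>"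
    using mvt_within[OF d, of z y] xy xz yz by auto
  have "f' \<xi> \<le> f' \<eta>" using mono[of \<xi> \<eta>] \<xi> \<eta> xy by auto
  then have "(f z - f x) * (y - z) \<le> (f y - f z) * (z - x)"
    using \<xi>(3) \<eta>(3) xz yz by (simp add: mult_left_mono)
  also have "z - x = t * (y - x)"
    by (simp add: z_def algebra_simps)
  also have "y - z = (1 - t) * (y - x)"
    by (simp add: z_def algebra_simps)
  finally have "(f y - f z) * t \<ge> (f z - f x) * (1 - t)"
    using xy by simp
  then show "f ((1 - t) *\<^sub>R x + t *\<^sub>R y) \<le> (1 - t) * f x + t * f y"
    by (simp add: z_def algebra_simps)
qed

theorem mainTheorem3:
  fixes u u1 u2 :: "real \<Rightarrow> real" and rM :: real
  assumes "0 < rM"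
    and "C2_solution rM u u1 u2"
    and maximal: "\<not> (\<exists>R v v1 v2. R > rM \<and> C2_solution R v v1 v2 \<and> (\<forall>r\<in>{0..<rM}. v r = u r))"
  shows "(\<forall>r\<in>{0<..<rM}. u1 r > 0) \<and> convex_on {0..<rM} u
         \<and> (\<forall>r\<in>{0..<rM}. u2 r > 0)"
proof -
  note R = \<open>0 < rM\<close>
  have du: "\<And>x. x \<in> {0..<rM} \<Longrightarrow> (u has_real_derivative u1 x) (at x within {0..<rM})"
   and du1: "\<And>x. x \<in> {0..<rM} \<Longrightarrow> (u1 has_real_derivative u2 x) (at x within {0..<rM})"
   and cq: "continuous_on {0..<rM} u2"
   and ode: "\<And>x. x \<in> {0..<rM} \<Longrightarrow> ode_eq x (u1 x) (u2 x)"
   and p0: "u1 0 = 0"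
    using assms(2) unfolding C2_solution_def by auto
  have R0: "0 \<in> {0..<rM}" using R by auto
  define F where "F = at (0::real) within {0..<rM}"
  have ntF: "\<not> trivial_limit F" unfolding F_def trivial_limit_within using R by simp
  have hp: "((\<lambda>y. (u1 y - u1 0) / (y - 0)) \<longlongrightarrow> u2 0) F"
    using du1[OF R0] unfolding F_def by (simp add: has_field_derivative_iff)
  have hq: "(u2 \<longlongrightarrow> u2 0) F"
    using cq R0 unfolding F_def continuous_on_def by blast
  have hp0: "(u1 \<longlongrightarrow> u1 0) F"
    using DERIV_continuous_on[OF du1] R0 unfolding F_def continuous_on_def by blast
  define E where "E y = 2*u2 y*(3*(u1 y)^2-1) - 2*((u1 y - u1 0)/(y-0))*(1+(u1 y)^2) + (1+(u1 y)^2)*(1+3*(u1 y)^2)" for y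
  have lim1: "(E \<longlongrightarrow> 2*u2 0*(3*(u1 0)^2-1) - 2*u2 0*(1+(u1 0)^2) + (1+(u1 0)^2)*(1+3*(u1 0)^2)) F"
    unfolding E_def by (intro tendsto_intros hp hq hp0)
  have ev: "eventually (\<lambda>y. y \<in> {0..<rM} \<and> y \<noteq> 0) F"
    unfolding F_def by (simp add: eventually_at_filter)
  have ev2: "eventually (\<lambda>y. 0 = E y) F"
  proof (rule eventually_mono[OF ev])
    fix y assume y: "y \<in> {0..<rM} \<and> y \<noteq> 0"
    then have o: "ode_eq y (u1 y) (u2 y)" using ode by auto
    show "0 = E y" using o y p0 unfolding E_def ode_eq_def by (simp add: field_simps)
  qed
  have lim2: "(E \<longlongrightarrow> 0) F"
    by (rule Lim_transform_eventually[OF tendsto_const ev2])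
  have "2*u2 0*(3*(u1 0)^2-1) - 2*u2 0*(1+(u1 0)^2) + (1+(u1 0)^2)*(1+3*(u1 0)^2) = 0"
    using tendsto_unique[OF ntF lim1 lim2] .
  then have q0: "u2 0 = 1/4" using p0 by simp
  define g where "g y = 2 * u1 y / (1 + 3 * (u1 y)^2) - y" for y
  define g' where "g' y = 2 * u2 y * (1 - 3 * (u1 y)^2) / (1 + 3 * (u1 y)^2)^2 - 1" for y
  have pos3: "\<And>y. 1 + 3 * (u1 y)^2 > 0" by (simp add: add_pos_nonneg)
  have dg: "(g has_real_derivative g' x) (at x within {0..<rM})" if x: "x \<in> {0..<rM}" for x
  proof -
    have "((\<lambda>y. 2 * u1 y / (1 + 3 * (u1 y)^2) - y) has_real_derivative
       (2 * u2 x * (1 + 3 * (u1 x)^2) - 2 * u1 x * (3 * (2 * u1 x * u2 x))) / (1 + 3 * (u1 x)^2)^2 - 1)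
       (at x within {0..<rM})"
      using pos3[of x]
      by (auto intro!: derivative_eq_intros du1[OF x] simp: power2_eq_square field_simps)
    moreover have "(2 * u2 x * (1 + 3 * (u1 x)^2) - 2 * u1 x * (3 * (2 * u1 x * u2 x))) / (1 + 3 * (u1 x)^2)^2 - 1 = g' x"
      unfolding g'_def by (simp add: algebra_simps power2_eq_square)
    ultimately show ?thesis unfolding g_def by simp
  qed
  have iden: "2 * x * u2 x * (3 * (u1 x)^2 - 1) = (1 + (u1 x)^2) * (1 + 3 * (u1 x)^2) * g x"
    if x: "x \<in> {0..<rM}" for x
  proof -
    have o: "ode_eq x (u1 x) (u2 x)" using ode x by auto
    have gx: "(1 + 3*(u1 x)^2) * g x = 2*u1 x - x*(1+3*(u1 x)^2)"
      unfolding g_def using pos3[of x] by (simp add: field_simps)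
    have "(1 + (u1 x)^2) * (1 + 3 * (u1 x)^2) * g x = (1 + (u1 x)^2) * (2*u1 x - x*(1+3*(u1 x)^2))"
      using gx by (metis mult.assoc)
    also have "\<dots> = 2 * x * u2 x * (3 * (u1 x)^2 - 1)"
    proof -
      have e: "x * (1 + 4 * (u1 x)^2 + 3 * (u1 x)^4) = (1 + (u1 x)^2) * (x*(1+3*(u1 x)^2))"
        by (simp add: algebra_simps power2_eq_square power4_eq_xxxx)
      show ?thesis using o e unfolding ode_eq_def by (simp add: algebra_simps)
    qed
    finally show ?thesis by simp
  qed
  have g0: "g 0 = 0" using p0 by (simp add: g_def)
  have g'0: "g' 0 < 0" using p0 q0 by (simp add: g'_def)
  have zz: "g' x < 0" if x: "x \<in> {0<..<rM}" "g x = 0" for x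
  proof -
    have "2 * x * u2 x * (3 * (u1 x)^2 - 1) = 0" using iden[of x] x by auto
    then have "u2 x = 0 \<or> 3 * (u1 x)^2 - 1 = 0" using x by auto
    then show ?thesis unfolding g'_def by auto
  qed
  have gneg: "\<forall>x\<in>{0<..<rM}. g x < 0"
    by (rule neg_lemma[OF R dg g0 g'0 zz])
  have qne: "u2 x \<noteq> 0" if x: "x \<in> {0<..<rM}" for x
  proof
    assume "u2 x = 0"
    then have "(1 + (u1 x)^2) * (1 + 3 * (u1 x)^2) * g x = 0" using iden[of x] x by auto
    moreover have "(1 + (u1 x)^2) * (1 + 3 * (u1 x)^2) > 0" using pos3[of x] by (simp add: add_pos_nonneg)
    ultimately have "g x = 0" by (metis less_irrefl mult_eq_0_iff)
    then show False using gneg x by fastforce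
  qed
  have qpos: "\<forall>x\<in>{0..<rM}. u2 x > 0"
  proof (rule ccontr)
    assume "\<not> ?thesis"
    then obtain x where x: "x \<in> {0..<rM}" "u2 x \<le> 0" by force
    have "continuous_on {0..x} u2" by (rule continuous_on_subset[OF cq]) (use x in auto)
    then obtain y where y: "0 \<le> y" "y \<le> x" "u2 y = 0" using IVT2'[of u2 x 0 0] x q0 by auto
    then have "y \<noteq> 0" using q0 by auto
    then show False using qne[of y] y x by auto
  qed
  have ppos: "\<forall>x\<in>{0<..<rM}. u1 x > 0"
  proof
    fix x assume x: "x \<in> {0<..<rM}"
    obtain z where z: "0 < z" "z < x" "u1 x - u1 0 = (x - 0) * u2 z"
      using mvt_within[OF du1, of 0 x] x by auto
    then show "u1 x > 0" using qpos x p0 by auto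
  qed
  have mono: "u1 x \<le> u1 y" if xy: "x \<in> {0..<rM}" "y \<in> {0..<rM}" "x \<le> y" for x y
  proof (cases "x = y")
    case False
    then obtain z where z: "x < z" "z < y" "u1 y - u1 x = (y - x) * u2 z"
      using mvt_within[OF du1, of x y] xy False by force
    have "u2 z > 0" using qpos z xy by auto
    then have "(y - x) * u2 z \<ge> 0" using z by simp
    then show ?thesis using z by simp
  qed simp
  have "convex_on {0..<rM} u" by (rule convex_within[OF du mono])
  then show ?thesis using ppos qpos by auto
qed
end
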